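(* If $f$ is a VCCR (over linear profiles) satisfying Coherent Defeat and Positive Involvement in Defeat, then $f$ refines the Split Cycle VCCR: $f(\mathbf P)\supseteq sc(\mathbf P)$ for every profile $\mathbf P$.
   Context: Profiles: functions $\mathbf P:V\to\mathcal L(X)$, where $V$ is a nonempty finite set of voters, $X$ a nonempty finite set of candidates (drawn from fixed infinite sets), and $\mathcal L(X)$ the strict linear orders on $X$; voter $i$ ranks $x$ above $y$ if $(x,y)\in\mathbf P(i)$. $\mathrm{Margin}_{\mathbf P}(x,y)$ = number of voters ranking $x$ above $y$ minus number ranking $y$ above $x$. A majority path from $x_1$ to $x_n$ is $(x_1,\dots,x_n)$ with $\mathrm{Margin}_{\mathbf P}(x_i,x_{i+1})>0$ for all $i<n$; its strength is the minimum of these margins. A VCCR assigns to each profile an asymmetric relation $f(\mathbf P)$ on the candidates. Split Cycle: $(x,y)\in sc(\mathbf P)$ iff $\mathrm{Margin}_{\mathbf P}(x,y)>0$ and it exceeds the strength of every majority path from $y$ to $x$. Coherent Defeat: if $\mathrm{Margin}_{\mathbf P}(x,y)>0$ and there is no majority path from $y$ to $x$, then $(x,y)\in f(\mathbf P)$. Positive Involvement in Defeat: if $(x,y)\notin f(\mathbf P)$ and $\mathbf P'$ is obtained by adding one new voter whose ballot ranks $y$ above $x$, then $(x,y)\notin f(\mathbf P')$. *)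

theory Defs
  imports Main
begin

text \<open>A profile with voter set V and candidate set X: every voter in V submits a strict
linear order on X (ballot (x,y) means x ranked above y); ballots of non-voters are
normalised to the empty relation, so that a profile is exactly a function V -> L(X).\<close>

definition strict_lin_order :: "'c set \<Rightarrow> ('c \<times> 'c) set \<Rightarrow> bool" where
  "strict_lin_order X r \<longleftrightarrow> r \<subseteq> X \<times> X \<and> trans r \<and> irrefl r \<and> total_on X r"

definition profile :: "'v set \<Rightarrow> 'c set \<Rightarrow> ('v \<Rightarrow> ('c \<times> 'c) set) \<Rightarrow> bool" where
  "profile V X P \<longleftrightarrow> finite V \<and> V \<noteq> {} \<and> finite X \<and> X \<noteq> {} \<and>
     (\<forall>i\<in>V. strict_lin_order X (P i)) \<and> (\<forall>i. i \<notin> V \<longrightarrow> P i = {})"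

definition margin :: "'v set \<Rightarrow> ('v \<Rightarrow> ('c \<times> 'c) set) \<Rightarrow> 'c \<Rightarrow> 'c \<Rightarrow> int" where
  "margin V P x y = int (card {i\<in>V. (x, y) \<in> P i}) - int (card {i\<in>V. (y, x) \<in> P i})"

definition majority_path :: "'v set \<Rightarrow> ('v \<Rightarrow> ('c \<times> 'c) set) \<Rightarrow> 'c list \<Rightarrow> 'c \<Rightarrow> 'c \<Rightarrow> bool" where
  "majority_path V P xs x y \<longleftrightarrow> length xs \<ge> 2 \<and> hd xs = x \<and> last xs = y \<and>
     (\<forall>k. Suc k < length xs \<longrightarrow> margin V P (xs ! k) (xs ! Suc k) > 0)"

definition path_strength :: "'v set \<Rightarrow> ('v \<Rightarrow> ('c \<times> 'c) set) \<Rightarrow> 'c list \<Rightarrow> int" where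
  "path_strength V P xs = Min {margin V P (xs ! k) (xs ! Suc k) | k. Suc k < length xs}"

definition split_cycle :: "'v set \<Rightarrow> ('v \<Rightarrow> ('c \<times> 'c) set) \<Rightarrow> ('c \<times> 'c) set" where
  "split_cycle V P = {(x, y). margin V P x y > 0 \<and>
     (\<forall>xs. majority_path V P xs y x \<longrightarrow> margin V P x y > path_strength V P xs)}"

definition vccr :: "('v set \<Rightarrow> 'c set \<Rightarrow> ('v \<Rightarrow> ('c \<times> 'c) set) \<Rightarrow> ('c \<times> 'c) set) \<Rightarrow> bool" where
  "vccr f \<longleftrightarrow> (\<forall>V X P. profile V X P \<longrightarrow> f V X P \<subseteq> X \<times> X \<and> asym (f V X P))"

definition coherent_defeat :: "('v set \<Rightarrow> 'c set \<Rightarrow> ('v \<Rightarrow> ('c \<times> 'c) set) \<Rightarrow> ('c \<times> 'c) set) \<Rightarrow> bool" where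
  "coherent_defeat f \<longleftrightarrow> (\<forall>V X P x y. profile V X P \<longrightarrow> margin V P x y > 0 \<longrightarrow>
     \<not> (\<exists>xs. majority_path V P xs y x) \<longrightarrow> (x, y) \<in> f V X P)"

definition positive_involvement_in_defeat ::
  "('v set \<Rightarrow> 'c set \<Rightarrow> ('v \<Rightarrow> ('c \<times> 'c) set) \<Rightarrow> ('c \<times> 'c) set) \<Rightarrow> bool" where
  "positive_involvement_in_defeat f \<longleftrightarrow> (\<forall>V X P x y j L. profile V X P \<longrightarrow> j \<notin> V \<longrightarrow>
     strict_lin_order X L \<longrightarrow> (y, x) \<in> L \<longrightarrow> (x, y) \<notin> f V X P \<longrightarrow>
     (x, y) \<notin> f (insert j V) X (P(j := L)))"

end

theory Submission
  imports Defs
begin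

lemma slo_asym: "strict_lin_order X L \<Longrightarrow> (a,b) \<in> L \<Longrightarrow> (b,a) \<notin> L"
  unfolding strict_lin_order_def trans_def irrefl_def by blast

lemma margin_pos_in:
  assumes "profile V X P" "margin V P a b > 0"
  shows "a \<in> X \<and> b \<in> X \<and> a \<noteq> b"
proof -
  have "card {i\<in>V. (a,b) \<in> P i} > 0" using assms(2) unfolding margin_def by linarith
  then have "{i\<in>V. (a,b) \<in> P i} \<noteq> {}" by (auto simp: card_gt_0_iff)
  then obtain i where i: "i \<in> V" "(a,b) \<in> P i" by blast
  then have "strict_lin_order X (P i)" using assms(1) unfolding profile_def by blast
  then show ?thesis using i unfolding strict_lin_order_def irrefl_def by auto
qed

lemma margin_parity:
  assumes "profile V X P" "a \<in> X" "b \<in> X" "a \<noteq> b"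
  shows "margin V P a b = int (card V) - 2 * int (card {i\<in>V. (b,a) \<in> P i})"
proof -
  let ?A = "{i\<in>V. (a,b) \<in> P i}"
  let ?B = "{i\<in>V. (b,a) \<in> P i}"
  have fin: "finite V" using assms(1) unfolding profile_def by blast
  have all: "\<forall>i\<in>V. strict_lin_order X (P i)" using assms(1) unfolding profile_def by blast
  have "?A = V - ?B"
  proof
    show "?A \<subseteq> V - ?B"
    proof
      fix i assume "i \<in> ?A"
      then have "i \<in> V" "(a,b) \<in> P i" by auto
      then show "i \<in> V - ?B" using all slo_asym[of X "P i" a b] by auto
    qed
    show "V - ?B \<subseteq> ?A"
    proof
      fix i assume i: "i \<in> V - ?B"
      then have "total_on X (P i)" using all unfolding strict_lin_order_def by auto
      then show "i \<in> ?A" using i assms(2-4) unfolding total_on_def by auto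
    qed
  qed
  then have "card ?A = card V - card ?B" using fin by (simp add: card_Diff_subset)
  moreover have "card ?B \<le> card V" using fin by (intro card_mono) auto
  ultimately show ?thesis unfolding margin_def by simp
qed

lemma add_one_profile:
  assumes "profile V X P" "j \<notin> V" "strict_lin_order X L"
  shows "profile (insert j V) X (P(j:=L))"
  using assms unfolding profile_def by auto

lemma card_add:
  assumes "finite V" "j \<notin> V"
  shows "card {i \<in> insert j V. (a,b) \<in> (P(j:=L)) i} = card {i\<in>V. (a,b) \<in> P i} + of_bool ((a,b) \<in> L)"
proof (cases "(a,b) \<in> L")
  case True
  then have "{i \<in> insert j V. (a,b) \<in> (P(j:=L)) i} = insert j {i\<in>V. (a,b) \<in> P i}"
    using assms(2) by auto
  then show ?thesis using True assms by simp
next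
  case False
  then have "{i \<in> insert j V. (a,b) \<in> (P(j:=L)) i} = {i\<in>V. (a,b) \<in> P i}"
    using assms(2) by auto
  then show ?thesis using False by simp
qed

lemma add_one_margin:
  assumes "finite V" "j \<notin> V"
  shows "margin (insert j V) (P(j:=L)) a b
     = margin V P a b + (of_bool ((a,b)\<in>L) - of_bool ((b,a)\<in>L))"
  unfolding margin_def using card_add[OF assms, of a b P L] card_add[OF assms, of b a P L] by simp

lemma add_voters:
  fixes f :: "'v set \<Rightarrow> 'c set \<Rightarrow> ('v \<Rightarrow> ('c \<times> 'c) set) \<Rightarrow> ('c \<times> 'c) set"
  assumes inf: "infinite (UNIV :: 'v set)" and pid: "positive_involvement_in_defeat f"
    and prof: "profile V X P" and L: "strict_lin_order X L" and yx: "(y,x) \<in> L"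
    and nf: "(x,y) \<notin> f V X P"
  shows "\<exists>V' P'. profile V' X P' \<and> (x,y) \<notin> f V' X P' \<and>
     (\<forall>a b. margin V' P' a b = margin V P a b + int k * (of_bool ((a,b)\<in>L) - of_bool ((b,a)\<in>L)))"
proof (induction k)
  case 0 then show ?case using prof nf by auto
next
  case (Suc k)
  then obtain V' P' where p: "profile V' X P'" and n: "(x,y) \<notin> f V' X P'"
    and m: "\<forall>a b. margin V' P' a b = margin V P a b + int k * (of_bool ((a,b)\<in>L) - of_bool ((b,a)\<in>L))"
    by blast
  have fv: "finite V'" using p unfolding profile_def by blast
  then obtain j where j: "j \<notin> V'" using ex_new_if_finite[OF inf] by blast
  have p2: "profile (insert j V') X (P'(j:=L))" using add_one_profile[OF p j L] .
  have n2: "(x,y) \<notin> f (insert j V') X (P'(j:=L))"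
    using pid p j L yx n unfolding positive_involvement_in_defeat_def by blast
  have m2: "\<forall>a b. margin (insert j V') (P'(j:=L)) a b = margin V P a b + int (Suc k) * (of_bool ((a,b)\<in>L) - of_bool ((b,a)\<in>L))"
  proof (intro allI)
    fix a b
    show "margin (insert j V') (P'(j:=L)) a b = margin V P a b + int (Suc k) * (of_bool ((a,b)\<in>L) - of_bool ((b,a)\<in>L))"
      using add_one_margin[OF fv j, of P' L a b] m[rule_format, of a b]
      by (cases "(a,b) \<in> L"; cases "(b,a) \<in> L") (simp_all add: algebra_simps)
  qed
  show ?case using p2 n2 m2 by blast
qed

lemma trancl_path:
  "(a,b) \<in> E\<^sup>+ \<Longrightarrow> \<exists>xs. length xs \<ge> 2 \<and> hd xs = a \<and> last xs = b \<and>
     (\<forall>k. Suc k < length xs \<longrightarrow> (xs!k, xs!Suc k) \<in> E)"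
proof (induction rule: trancl_induct)
  case (base c) show ?case by (intro exI[of _ "[a,c]"]) (auto simp: less_Suc_eq base)
next
  case (step c d)
  then obtain xs where xs: "length xs \<ge> 2" "hd xs = a" "last xs = c"
     "\<forall>k. Suc k < length xs \<longrightarrow> (xs!k, xs!Suc k) \<in> E" by blast
  have ne: "xs \<noteq> []" using xs(1) by auto
  show ?case
  proof (intro exI[of _ "xs @ [d]"] conjI allI impI)
    show "2 \<le> length (xs @ [d])" using xs by simp
    show "hd (xs @ [d]) = a" using xs ne by simp
    show "last (xs @ [d]) = d" by simp
    fix k assume k: "Suc k < length (xs@[d])"
    then have "Suc k < length xs \<or> Suc k = length xs" by (simp, linarith)
    then consider "Suc k < length xs" | "Suc k = length xs" by blast
    then show "((xs@[d])!k, (xs@[d])!Suc k) \<in> E"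
    proof cases
      case 1 then show ?thesis using xs(4) by (simp add: nth_append)
    next
      case 2
      then have "k = length xs - 1" by simp
      then have "xs ! k = c" using xs(3) ne by (simp add: last_conv_nth)
      then show ?thesis using 2 step(2) by (simp add: nth_append)
    qed
  qed
qed

lemma crossing:
  "xs \<noteq> [] \<Longrightarrow> hd xs \<in> R \<Longrightarrow> last xs \<notin> R \<Longrightarrow> \<exists>k. Suc k < length xs \<and> xs!k \<in> R \<and> xs!Suc k \<notin> R"
proof (induction xs)
  case Nil then show ?case by simp
next
  case (Cons a xs)
  show ?case
  proof (cases "xs = []")
    case True then show ?thesis using Cons by simp
  next
    case False
    show ?thesis
    proof (cases "hd xs \<in> R")
      case True
      then obtain k where "Suc k < length xs \<and> xs!k \<in> R \<and> xs!Suc k \<notin> R"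
        using Cons False by auto
      then show ?thesis by (intro exI[of _ "Suc k"]) simp
    next
      case f2: False
      then show ?thesis using Cons False
        by (intro exI[of _ 0]) (auto simp: hd_conv_nth)
    qed
  qed
qed


theorem theorem4p5:
  fixes f :: "'v set \<Rightarrow> 'c set \<Rightarrow> ('v \<Rightarrow> ('c \<times> 'c) set) \<Rightarrow> ('c \<times> 'c) set"
  assumes "infinite (UNIV :: 'v set)" and "infinite (UNIV :: 'c set)"
    and "vccr f" and "coherent_defeat f" and "positive_involvement_in_defeat f"
  shows "\<forall>V X P. profile V X P \<longrightarrow> split_cycle V P \<subseteq> f V X P"
proof (intro allI impI subsetI)
  fix V :: "'v set" and X :: "'c set" and P :: "'v \<Rightarrow> ('c \<times> 'c) set" and p :: "'c \<times> 'c"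
  assume prof: "profile V X P" and psc: "p \<in> split_cycle V P"
  obtain x y where pxy: "p = (x,y)" by (cases p)
  define n where "n = margin V P x y"
  have npos: "n > 0" using psc pxy unfolding split_cycle_def n_def by auto
  have sc: "\<And>xs. majority_path V P xs y x \<Longrightarrow> n > path_strength V P xs"
    using psc pxy unfolding split_cycle_def n_def by auto
  have xyX: "x \<in> X \<and> y \<in> X \<and> x \<noteq> y" using margin_pos_in[OF prof] npos n_def by blast
  show "p \<in> f V X P"
  proof (rule ccontr)
    assume "p \<notin> f V X P"
    then have nf: "(x,y) \<notin> f V X P" using pxy by simp
    define E where "E = {(a,b). margin V P a b \<ge> n}"
    define R where "R = {z. (y,z) \<in> E\<^sup>*}"
    have yR: "y \<in> R" unfolding R_def by simp
    have cut: "\<And>a b. a \<in> R \<Longrightarrow> b \<notin> R \<Longrightarrow> margin V P a b < n"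
    proof (rule ccontr)
      fix a b assume "a \<in> R" "b \<notin> R" "\<not> margin V P a b < n"
      then have "(a,b) \<in> E" "(y,a) \<in> E\<^sup>*" unfolding E_def R_def by auto
      then have "(y,b) \<in> E\<^sup>*" by (meson rtrancl_into_rtrancl)
      then show False using \<open>b \<notin> R\<close> unfolding R_def by simp
    qed
    have xR: "x \<notin> R"
    proof
      assume "x \<in> R"
      then have "(y,x) \<in> E\<^sup>*" unfolding R_def by simp
      then have "(y,x) \<in> E\<^sup>+" using xyX by (auto dest: rtranclD)
      then obtain xs where xs: "length xs \<ge> 2" "hd xs = y" "last xs = x"
        "\<forall>k. Suc k < length xs \<longrightarrow> (xs!k, xs!Suc k) \<in> E" using trancl_path by metis
      have ge: "\<forall>k. Suc k < length xs \<longrightarrow> margin V P (xs!k) (xs!Suc k) \<ge> n"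
        using xs(4) unfolding E_def by auto
      have mp: "majority_path V P xs y x" unfolding majority_path_def using xs ge npos
        by (meson less_le_trans)
      let ?S = "{margin V P (xs ! k) (xs ! Suc k) | k. Suc k < length xs}"
      have "?S \<subseteq> (\<lambda>k. margin V P (xs ! k) (xs ! Suc k)) ` {..<length xs}" by auto
      then have finS: "finite ?S" by (rule finite_subset) simp
      have neS: "?S \<noteq> {}" using xs(1) by (auto intro!: exI[of _ 0])
      have "n \<le> Min ?S" using finS neS ge by (auto simp: Min_ge_iff)
      then have "n \<le> path_strength V P xs" unfolding path_strength_def .
      then show False using sc[OF mp] by simp
    qed
    have finX: "finite X" using prof unfolding profile_def by blast
    obtain h :: "'c \<Rightarrow> nat" where inj: "inj_on h X"
      using finite_imp_inj_to_nat_seg[OF finX] by blast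
    define g :: "'c \<Rightarrow> nat" where
      "g z = (if z = y then 1 else if z = x then 2 else if z \<in> R then 3 else 0)" for z
    define L where "L = {(a,b). a \<in> X \<and> b \<in> X \<and> (g a < g b \<or> (g a = g b \<and> h a < h b))}"
    have Lslo: "strict_lin_order X L"
      unfolding strict_lin_order_def
    proof (intro conjI)
      show "L \<subseteq> X \<times> X" unfolding L_def by auto
      show "trans L" unfolding L_def trans_def by auto
      show "irrefl L" unfolding L_def irrefl_def by auto
      show "total_on X L" unfolding L_def total_on_def
        using inj by (auto simp: inj_on_def) (meson linorder_neqE_nat)
    qed
    have yxL: "(y,x) \<in> L" unfolding L_def g_def using xyX by auto
    have xyL: "(x,y) \<notin> L" using slo_asym[OF Lslo yxL] .
    obtain V' P' where p': "profile V' X P'" and nf': "(x,y) \<notin> f V' X P'"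
      and m': "\<forall>a b. margin V' P' a b = margin V P a b + int (nat (n-1)) * (of_bool ((a,b)\<in>L) - of_bool ((b,a)\<in>L))"
      using add_voters[OF assms(1) assms(5) prof Lslo yxL nf, of "nat (n-1)"] by blast
    have kk: "int (nat (n-1)) = n - 1" using npos by simp
    have mxy: "margin V' P' x y = 1" using m' xyL yxL kk n_def by simp
    have nopath: "\<not> (\<exists>xs. majority_path V' P' xs y x)"
    proof
      assume "\<exists>xs. majority_path V' P' xs y x"
      then obtain xs where mp: "majority_path V' P' xs y x" by blast
      then have "xs \<noteq> []" "hd xs \<in> R" "last xs \<notin> R" using yR xR unfolding majority_path_def by auto
      then obtain k where k: "Suc k < length xs" "xs!k \<in> R" "xs!Suc k \<notin> R"
        using crossing by metis
      define a where "a = xs!k"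
      define b where "b = xs!Suc k"
      have pos: "margin V' P' a b > 0" using mp k unfolding majority_path_def a_def b_def by blast
      have abX: "a \<in> X \<and> b \<in> X \<and> a \<noteq> b" using margin_pos_in[OF p' pos] .
      have aR: "a \<in> R" and bR: "b \<notin> R" using k a_def b_def by auto
      show False
      proof (cases "a = y \<and> b = x")
        case True
        have "margin V P y x = - n" using n_def
          unfolding margin_def by simp
        then have "margin V' P' a b = -1" using True m' xyL yxL kk by simp
        then show False using pos by simp
      next
        case False
        have "g b < g a" using False aR bR yR xR unfolding g_def by auto
        then have baL: "(b,a) \<in> L" unfolding L_def using abX by auto
        have abL: "(a,b) \<notin> L" using slo_asym[OF Lslo baL] .
        have "margin V P a b < n" using cut aR bR .
        moreover have "margin V P a b = int (card V) - 2 * int (card {i\<in>V. (b,a) \<in> P i})"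
          using margin_parity[OF prof] abX by blast
        moreover have "n = int (card V) - 2 * int (card {i\<in>V. (y,x) \<in> P i})"
          using margin_parity[OF prof] xyX n_def by blast
        ultimately have "margin V P a b \<le> n - 2" by presburger
        then have "margin V' P' a b \<le> -1" using m' abL baL kk by simp
        then show False using pos by simp
      qed
    qed
    have "(x,y) \<in> f V' X P'" using assms(4) p' mxy nopath
      unfolding coherent_defeat_def by auto
    then show False using nf' by simp
  qed
qed

end
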